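(* Let $r\ge1$ and $N\ge r$ be integers, let $a_{-r},\dots,a_0$ be coefficients with $a_{-r}\neq0$ and $|a_0|<1$, and let $B\in\mathcal M_{r,N}(\mathbb C)$ be a constant matrix whose left $r\times r$ block $B[1:r,1:r]$ is invertible. For every $z\in\overline{\mathcal U}$ there exists a unique matrix $C(z)\in\mathcal M_r(\mathbb C)$ such that \[ B\,\pi(U)=\big(0_{r\times(N-r)}\ \big|\ C(z)\big)\,\pi(U)\quad\text{for all }U\in\mathcal E^s(z). \] Moreover the entries of $C(z)$ are polynomial functions of $z$, and $\det C(z)$ is a polynomial in $z$ of degree exactly $N-r$.
   Context: $\overline{\mathcal U}=\{z\in\mathbb C:|z|\ge1\}$. For $z\in\overline{\mathcal U}$, $\mathcal E^s(z)$ denotes the (r-dimensional) space of complex sequences $U=(U_j)_{j\ge -r}$ satisfying $zU_j=\sum_{k=-r}^{0}a_kU_{j+k}$ for all $j\ge 0$. The map $\pi$ sends such a sequence to its first $N$ components, $\pi(U)=(U_{-r},U_{-r+1},\dots,U_{-r+N-1})^T\in\mathbb C^N$. $0_{r\times(N-r)}$ is the zero matrix, so $(0\,|\,C(z))\in\mathcal M_{r,N}(\mathbb C)$. *)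

theory Defs
  imports "Jordan_Normal_Form.Determinant" "HOL-Computational_Algebra.Polynomial"
begin

text \<open>Stable space E^s(z): complex sequences U indexed by integers j >= -r
  (entries below -r are fixed to 0, i.e. not part of the sequence) satisfying
  z U_j = sum_{k=-r}^{0} a_k U_{j+k} for all j >= 0.\<close>
definition Es :: "nat \<Rightarrow> (int \<Rightarrow> complex) \<Rightarrow> complex \<Rightarrow> (int \<Rightarrow> complex) set" where
  "Es r a z = {U. (\<forall>j. j < - int r \<longrightarrow> U j = 0) \<and>
      (\<forall>j\<ge>0. z * U j = (\<Sum>k\<in>{- int r..0}. a k * U (j + k)))}"

definition piN :: "nat \<Rightarrow> nat \<Rightarrow> (int \<Rightarrow> complex) \<Rightarrow> complex vec" where
  "piN r N U = vec N (\<lambda>i. U (int i - int r))"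

definition zero_pad :: "nat \<Rightarrow> nat \<Rightarrow> complex mat \<Rightarrow> complex mat" where
  "zero_pad r N C = mat r N (\<lambda>(i, j). if j < N - r then 0 else C $$ (i, j - (N - r)))"

definition left_block :: "nat \<Rightarrow> complex mat \<Rightarrow> complex mat" where
  "left_block r B = mat r r (\<lambda>(i, j). B $$ (i, j))"

end

theory Submission
  imports Defs
begin

fun fpoly :: "nat \<Rightarrow> (int \<Rightarrow> complex) \<Rightarrow> nat \<Rightarrow> nat \<Rightarrow> complex poly" where
 "fpoly r a n s = (if n < r \<or> r = 0 then (if n = s then 1 else 0) else
   smult (1 / a (- int r)) ([:- a 0, 1:] * fpoly r a (n - r) s
     - (\<Sum>k\<in>{1..<r}. smult (a (int k - int r)) (fpoly r a (n - k) s))))"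
declare fpoly.simps[simp del]

lemma poly_fpoly_step:
  assumes "r \<le> n" "r \<ge> 1"
  shows "poly (fpoly r a n s) z = (1 / a (- int r)) * ((z - a 0) * poly (fpoly r a (n - r) s) z
     - (\<Sum>k\<in>{1..<r}. a (int k - int r) * poly (fpoly r a (n - k) s) z))"
  using assms by (subst fpoly.simps) (simp add: poly_sum algebra_simps)

lemma h_rec:
  fixes z :: complex and x :: "nat \<Rightarrow> complex"
  assumes "r \<le> n" "r \<ge> 1" "a (- int r) \<noteq> 0"
  defines "h \<equiv> \<lambda>n. (\<Sum>s<r. poly (fpoly r a n s) z * x s)"
  shows "a (- int r) * h n = (z - a 0) * h (n - r) - (\<Sum>k\<in>{1..<r}. a (int k - int r) * h (n - k))"
proof -
  have "a (- int r) * h n = (\<Sum>s<r. ((z - a 0) * poly (fpoly r a (n - r) s) z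
     - (\<Sum>k\<in>{1..<r}. a (int k - int r) * poly (fpoly r a (n - k) s) z)) * x s)"
    unfolding h_def sum_distrib_left poly_fpoly_step[OF assms(1,2)]
    using assms(3) by (intro sum.cong) auto
  also have "\<dots> = (z - a 0) * h (n - r) - (\<Sum>s<r. (\<Sum>k\<in>{1..<r}. a (int k - int r) * poly (fpoly r a (n - k) s) z * x s))"
    unfolding h_def left_diff_distrib sum_subtractf sum_distrib_left sum_distrib_right
    by (simp add: mult.assoc)
  also have "\<dots> = (z - a 0) * h (n - r) - (\<Sum>k\<in>{1..<r}. a (int k - int r) * h (n - k))"
    unfolding h_def sum_distrib_left by (subst sum.swap) (simp add: mult.assoc)
  finally show ?thesis .
qed

lemma rec_repr:
  assumes r1: "r \<ge> 1" and ar: "a (- int r) \<noteq> 0"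
    and rec: "\<And>n. r \<le> n \<Longrightarrow> n < L \<Longrightarrow>
       a (- int r) * V n = (z - a 0) * V (n - r) - (\<Sum>k\<in>{1..<r}. a (int k - int r) * V (n - k))"
  shows "n < L \<Longrightarrow> V n = (\<Sum>s<r. poly (fpoly r a n s) z * V s)"
proof (induction n rule: less_induct)
  case (less n)
  define h where "h \<equiv> \<lambda>n. (\<Sum>s<r. poly (fpoly r a n s) z * V s)"
  show ?case
  proof (cases "n < r")
    case True
    have "(\<Sum>s<r. poly (fpoly r a n s) z * V s) = (\<Sum>s<r. (if s = n then V n else 0))"
      by (intro sum.cong) (auto simp: fpoly.simps True)
    also have "\<dots> = V n" using True by simp
    finally show ?thesis by simp
  next
    case False
    have IH1: "V (n - r) = h (n - r)" unfolding h_def using less r1 False by (intro less.IH) auto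
    have IH2: "V (n - k) = h (n - k)" if "k \<in> {1..<r}" for k
      unfolding h_def using less r1 False that by (intro less.IH) auto
    have "a (- int r) * V n = (z - a 0) * h (n - r) - (\<Sum>k\<in>{1..<r}. a (int k - int r) * h (n - k))"
    proof -
      have "(\<Sum>k\<in>{1..<r}. a (int k - int r) * V (n - k)) = (\<Sum>k\<in>{1..<r}. a (int k - int r) * h (n - k))"
        by (rule sum.cong[OF refl]) (simp only: IH2)
      then show ?thesis using rec[of n] False less IH1 by simp
    qed
    also have "\<dots> = a (- int r) * h n"
      unfolding h_def using h_rec[of r n a z V] False r1 ar by simp
    finally show ?thesis using ar unfolding h_def by simp
  qed
qed
lemma sum_split_window:
  assumes "r \<ge> (1::nat)"
  shows "(\<Sum>k\<in>{- int r..0}. g k) = g (- int r) + g 0 + (\<Sum>k\<in>{1..<r}. g (int k - int r))"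
proof -
  have "(\<Sum>k\<in>{- int r..0}. g k) = (\<Sum>k\<in>{0..r}. g (int k - int r))"
    by (rule sum.reindex_bij_witness[where j="\<lambda>k. nat (k + int r)" and i="\<lambda>k. int k - int r"]) auto
  also have "{0..r} = insert 0 (insert r {1..<r})" using assms by auto
  also have "(\<Sum>k\<in>insert 0 (insert r {1..<r}). g (int k - int r)) = g (- int r) + g 0 + (\<Sum>k\<in>{1..<r}. g (int k - int r))"
    using assms by (simp add: algebra_simps)
  finally show ?thesis .
qed

lemma Es_rec:
  assumes U: "U \<in> Es r a z" and r1: "r \<ge> 1" and rn: "r \<le> n" and nN: "n < N"
  defines "V \<equiv> \<lambda>n. U (int (N - 1 - n) - int r)"
  shows "a (- int r) * V n = (z - a 0) * V (n - r) - (\<Sum>k\<in>{1..<r}. a (int k - int r) * V (n - k))"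
proof -
  define j where "j = int (N - 1 - n)"
  have j0: "j \<ge> 0" unfolding j_def by simp
  from U j0 have "z * U j = (\<Sum>k\<in>{- int r..0}. a k * U (j + k))" unfolding Es_def by auto
  also have "\<dots> = a (- int r) * U (j - int r) + a 0 * U j + (\<Sum>k\<in>{1..<r}. a (int k - int r) * U (j + (int k - int r)))"
    using sum_split_window[OF r1, of "\<lambda>k. a k * U (j + k)"] by simp
  finally have e: "z * U j = a (- int r) * U (j - int r) + a 0 * U j + (\<Sum>k\<in>{1..<r}. a (int k - int r) * U (j + (int k - int r)))" .
  have "V n = U (j - int r)" unfolding V_def j_def by simp
  moreover have "V (n - r) = U j" unfolding V_def j_def using rn nN by (simp add: of_nat_diff algebra_simps)
  moreover have "V (n - k) = U (j + (int k - int r))" if "k \<in> {1..<r}" for k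
    unfolding V_def j_def using rn nN that by (simp add: of_nat_diff algebra_simps)
  ultimately show ?thesis using e by (simp add: algebra_simps)
qed

fun gseq :: "nat \<Rightarrow> nat \<Rightarrow> (int \<Rightarrow> complex) \<Rightarrow> complex \<Rightarrow> (nat \<Rightarrow> complex) \<Rightarrow> nat \<Rightarrow> complex" where
  "gseq r N a z x i = (if i < N \<or> i < r \<or> r = 0 then (\<Sum>s<r. poly (fpoly r a (N - 1 - i) s) z * x s)
     else (a (- int r) * gseq r N a z x (i - r) + (\<Sum>k\<in>{1..<r}. a (int k - int r) * gseq r N a z x (i - r + k))) / (z - a 0))"
declare gseq.simps[simp del]

definition Useq :: "nat \<Rightarrow> nat \<Rightarrow> (int \<Rightarrow> complex) \<Rightarrow> complex \<Rightarrow> (nat \<Rightarrow> complex) \<Rightarrow> int \<Rightarrow> complex" where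
  "Useq r N a z x u = (if u < - int r then 0 else gseq r N a z x (nat (u + int r)))"

lemma Useq_Es:
  assumes r1: "r \<ge> 1" and rN: "r \<le> N" and ar: "a (- int r) \<noteq> 0" and za: "z \<noteq> a 0"
  shows "Useq r N a z x \<in> Es r a z"
  unfolding Es_def
proof (intro CollectI conjI allI impI)
  fix j :: int assume "j < - int r" then show "Useq r N a z x j = 0" unfolding Useq_def by simp
next
  fix j :: int assume j0: "j \<ge> 0"
  let ?U = "Useq r N a z x" and ?g = "gseq r N a z x"
  define i where "i = nat j + r"
  have Uj: "?U j = ?g i" unfolding Useq_def i_def using j0 by (simp add: nat_add_distrib)
  have Ujr: "?U (j - int r) = ?g (i - r)" unfolding Useq_def i_def using j0 by simp
  have Ujk: "?U (j + (int k - int r)) = ?g (i - r + k)" if "k \<in> {1..<r}" for k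
    unfolding Useq_def i_def using j0 that by (simp add: nat_add_distrib)
  have "(\<Sum>k\<in>{- int r..0}. a k * ?U (j + k)) = a (- int r) * ?U (j - int r) + a 0 * ?U j + (\<Sum>k\<in>{1..<r}. a (int k - int r) * ?U (j + (int k - int r)))"
    using sum_split_window[OF r1, of "\<lambda>k. a k * ?U (j + k)"] by simp
  also have "\<dots> = a (- int r) * ?g (i - r) + a 0 * ?g i + (\<Sum>k\<in>{1..<r}. a (int k - int r) * ?g (i - r + k))"
    using Uj Ujr Ujk by simp
  also have "\<dots> = z * ?g i"
  proof (cases "i < N")
    case True
    define h where "h \<equiv> \<lambda>n. (\<Sum>s<r. poly (fpoly r a n s) z * x s)"
    define n where "n = N - 1 - i"
    have gi: "?g i' = h (N - 1 - i')" if "i' < N" for i' using that unfolding h_def by (simp add: gseq.simps)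
    have hr: "a (- int r) * h (n + r) = (z - a 0) * h (n + r - r) - (\<Sum>k\<in>{1..<r}. a (int k - int r) * h (n + r - k))"
      unfolding h_def by (rule h_rec) (use r1 ar in auto)
    have "?g i = h n" using gi[OF True] n_def by simp
    moreover have "?g (i - r) = h (n + r)" using gi[of "i - r"] True n_def i_def by simp
    moreover have "?g (i - r + k) = h (n + r - k)" if "k \<in> {1..<r}" for k
      using gi[of "i - r + k"] True n_def i_def that by auto
    ultimately show ?thesis using hr by (simp add: algebra_simps)
  next
    case False
    then have "?g i = (a (- int r) * ?g (i - r) + (\<Sum>k\<in>{1..<r}. a (int k - int r) * ?g (i - r + k))) / (z - a 0)"
      using r1 i_def by (subst gseq.simps) simp
    then show ?thesis using za by (simp add: field_simps)
  qed
  finally show "z * ?U j = (\<Sum>k\<in>{- int r..0}. a k * ?U (j + k))" using Uj by simp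
qed

lemma Useq_window:
  assumes r1: "r \<ge> 1" and rN: "r \<le> N" and s: "s < r"
  shows "Useq r N a z x (int (N - 1 - s) - int r) = x s"
proof -
  have "Useq r N a z x (int (N - 1 - s) - int r) = gseq r N a z x (N - 1 - s)"
  proof -
    have "nat (int (N - 1 - s) - int r + int r) = N - 1 - s" by simp
    then show ?thesis unfolding Useq_def using s rN by simp
  qed
  also have "\<dots> = (\<Sum>s'<r. poly (fpoly r a s s') z * x s')"
    using s rN by (subst gseq.simps) simp
  also have "\<dots> = (\<Sum>s'<r. if s' = s then x s else 0)"
    using s by (intro sum.cong) (auto simp: fpoly.simps)
  also have "\<dots> = x s" using s by simp
  finally show ?thesis .
qed
lemma B_piN:
  assumes "B \<in> carrier_mat r N" "t < r"
  shows "(B *\<^sub>v piN r N U) $ t = (\<Sum>i<N. B $$ (t, i) * U (int i - int r))"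
  using assms unfolding piN_def
  by (simp add: scalar_prod_def row_def lessThan_atLeast0)

lemma zp_piN:
  assumes "C \<in> carrier_mat r r" "r \<le> N" "t < r"
  shows "(zero_pad r N C *\<^sub>v piN r N U) $ t = (\<Sum>p<r. C $$ (t, p) * U (int (N - r + p) - int r))"
proof -
  have "(zero_pad r N C *\<^sub>v piN r N U) $ t =
     (\<Sum>j<N. (if j < N - r then 0 else C $$ (t, j - (N - r))) * U (int j - int r))"
    using assms unfolding piN_def zero_pad_def
    by (simp add: scalar_prod_def row_def lessThan_atLeast0)
  also have "\<dots> = (\<Sum>j\<in>{N - r..<N}. (if j < N - r then 0 else C $$ (t, j - (N - r))) * U (int j - int r))"
    by (rule sum.mono_neutral_right) auto
  also have "\<dots> = (\<Sum>p<r. C $$ (t, p) * U (int (N - r + p) - int r))"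
    by (rule sum.reindex_bij_witness[where i="\<lambda>p. N - r + p" and j="\<lambda>j. j - (N - r)"])
      (use assms in auto)
  finally show ?thesis .
qed

lemma comm_ring_hom_poly: "comm_ring_hom (\<lambda>p. poly p (z::'a::comm_ring_1))"
  by unfold_locales auto

definition Fm :: "nat \<Rightarrow> nat \<Rightarrow> (int \<Rightarrow> complex) \<Rightarrow> complex poly mat" where
  "Fm r N a = mat N r (\<lambda>(i, p). fpoly r a (N - 1 - i) (r - 1 - p))"

definition Pm :: "nat \<Rightarrow> nat \<Rightarrow> (int \<Rightarrow> complex) \<Rightarrow> complex mat \<Rightarrow> complex poly mat" where
  "Pm r N a B = map_mat (\<lambda>b. [:b:]) B * Fm r N a"

lemma Pm_carrier: "B \<in> carrier_mat r N \<Longrightarrow> Pm r N a B \<in> carrier_mat r r"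
  unfolding Pm_def Fm_def by auto

lemma Pm_entry:
  assumes "B \<in> carrier_mat r N" "t < r" "p < r"
  shows "Pm r N a B $$ (t, p) = (\<Sum>i<N. [:B $$ (t, i):] * fpoly r a (N - 1 - i) (r - 1 - p))"
  using assms unfolding Pm_def Fm_def
  by (simp add: scalar_prod_def row_def col_def lessThan_atLeast0)

lemma Pm_eval_entry:
  assumes "B \<in> carrier_mat r N" "t < r" "p < r"
  shows "map_mat (\<lambda>q. poly q z) (Pm r N a B) $$ (t, p) = (\<Sum>i<N. B $$ (t, i) * poly (fpoly r a (N - 1 - i) (r - 1 - p)) z)"
proof -
  have d: "dim_row (Pm r N a B) = r" "dim_col (Pm r N a B) = r" using Pm_carrier[OF assms(1), of a] by auto
  show ?thesis using assms d by (simp add: Pm_entry poly_sum)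
qed

lemma Pm_identity:
  assumes r1: "r \<ge> 1" and rN: "r \<le> N" and ar: "a (- int r) \<noteq> 0"
    and B: "B \<in> carrier_mat r N" and U: "U \<in> Es r a z"
  shows "B *\<^sub>v piN r N U = zero_pad r N (map_mat (\<lambda>p. poly p z) (Pm r N a B)) *\<^sub>v piN r N U"
proof (rule eq_vecI)
  let ?C = "map_mat (\<lambda>p. poly p z) (Pm r N a B)"
  have C: "?C \<in> carrier_mat r r" using Pm_carrier[OF B] by simp
  show "dim_vec (B *\<^sub>v piN r N U) = dim_vec (zero_pad r N ?C *\<^sub>v piN r N U)"
    using B by (simp add: zero_pad_def)
  fix t assume "t < dim_vec (zero_pad r N ?C *\<^sub>v piN r N U)"
  then have t: "t < r" by (simp add: zero_pad_def)
  define V where "V \<equiv> \<lambda>n. U (int (N - 1 - n) - int r)"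
  have rep: "V n = (\<Sum>s<r. poly (fpoly r a n s) z * V s)" if "n < N" for n
    by (rule rec_repr[where r=r and a=a and L=N, OF r1 ar]) (use Es_rec[OF U r1] that in \<open>auto simp: V_def\<close>)
  have "(B *\<^sub>v piN r N U) $ t = (\<Sum>i<N. B $$ (t, i) * U (int i - int r))" by (rule B_piN[OF B t])
  also have "\<dots> = (\<Sum>i<N. B $$ (t, i) * (\<Sum>s<r. poly (fpoly r a (N - 1 - i) s) z * V s))"
  proof (rule sum.cong[OF refl])
    fix i assume "i \<in> {..<N}"
    then have "U (int i - int r) = V (N - 1 - i)" unfolding V_def by (simp add: of_nat_diff)
    then show "B $$ (t, i) * U (int i - int r) = B $$ (t, i) * (\<Sum>s<r. poly (fpoly r a (N - 1 - i) s) z * V s)"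
      using rep[of "N - 1 - i"] \<open>i \<in> {..<N}\<close> by simp
  qed
  also have "\<dots> = (\<Sum>i<N. B $$ (t, i) * (\<Sum>p<r. poly (fpoly r a (N - 1 - i) (r - 1 - p)) z * V (r - 1 - p)))"
  proof (rule sum.cong[OF refl])
    fix i
    show "B $$ (t, i) * (\<Sum>s<r. poly (fpoly r a (N - 1 - i) s) z * V s) = B $$ (t, i) * (\<Sum>p<r. poly (fpoly r a (N - 1 - i) (r - 1 - p)) z * V (r - 1 - p))"
      using sum.nat_diff_reindex[of "\<lambda>s. poly (fpoly r a (N - 1 - i) s) z * V s" r] by simp
  qed
  also have "\<dots> = (\<Sum>p<r. (\<Sum>i<N. B $$ (t, i) * poly (fpoly r a (N - 1 - i) (r - 1 - p)) z) * V (r - 1 - p))"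
    by (simp add: sum_distrib_left sum_distrib_right mult.assoc) (rule sum.swap)
  also have "\<dots> = (\<Sum>p<r. ?C $$ (t, p) * U (int (N - r + p) - int r))"
  proof (rule sum.cong[OF refl])
    fix p assume p: "p \<in> {..<r}"
    have "V (r - 1 - p) = U (int (N - r + p) - int r)" unfolding V_def using p rN by (simp add: of_nat_diff)
    then show "(\<Sum>i<N. B $$ (t, i) * poly (fpoly r a (N - 1 - i) (r - 1 - p)) z) * V (r - 1 - p) = ?C $$ (t, p) * U (int (N - r + p) - int r)"
      using Pm_eval_entry[OF B t, of p z a] p by simp
  qed
  also have "\<dots> = (zero_pad r N ?C *\<^sub>v piN r N U) $ t" using zp_piN[OF C rN t] by simp
  finally show "(B *\<^sub>v piN r N U) $ t = (zero_pad r N ?C *\<^sub>v piN r N U) $ t" .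
qed

lemma unique_C:
  assumes r1: "r \<ge> 1" and rN: "r \<le> N" and ar: "a (- int r) \<noteq> 0" and za: "z \<noteq> a 0"
    and C1: "C1 \<in> carrier_mat r r" and C2: "C2 \<in> carrier_mat r r"
    and h1: "\<forall>U\<in>Es r a z. B *\<^sub>v piN r N U = zero_pad r N C1 *\<^sub>v piN r N U"
    and h2: "\<forall>U\<in>Es r a z. B *\<^sub>v piN r N U = zero_pad r N C2 *\<^sub>v piN r N U"
  shows "C1 = C2"
proof (rule eq_matI)
  show "dim_row C1 = dim_row C2" "dim_col C1 = dim_col C2" using C1 C2 by auto
  fix t p0 assume t: "t < dim_row C2" and p0: "p0 < dim_col C2"
  then have t: "t < r" and p0: "p0 < r" using C2 by auto
  define x where "x \<equiv> \<lambda>s. if s = r - 1 - p0 then 1 else (0::complex)"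
  define U where "U \<equiv> Useq r N a z x"
  have U: "U \<in> Es r a z" unfolding U_def by (rule Useq_Es[OF r1 rN ar za])
  have val: "(zero_pad r N C *\<^sub>v piN r N U) $ t = C $$ (t, p0)" if C: "C \<in> carrier_mat r r" for C
  proof -
    have "(zero_pad r N C *\<^sub>v piN r N U) $ t = (\<Sum>p<r. C $$ (t, p) * U (int (N - r + p) - int r))"
      by (rule zp_piN[OF C rN t])
    also have "\<dots> = (\<Sum>p<r. C $$ (t, p) * x (r - 1 - p))"
    proof (rule sum.cong[OF refl])
      fix p assume p: "p \<in> {..<r}"
      have "N - r + p = N - 1 - (r - 1 - p)" using p rN by auto
      then show "C $$ (t, p) * U (int (N - r + p) - int r) = C $$ (t, p) * x (r - 1 - p)"
        unfolding U_def using Useq_window[OF r1 rN, of "r - 1 - p" a z x] p by simp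
    qed
    also have "\<dots> = (\<Sum>p<r. if p = p0 then C $$ (t, p0) else 0)"
      by (rule sum.cong[OF refl]) (use p0 in \<open>auto simp: x_def\<close>)
    also have "\<dots> = C $$ (t, p0)" using p0 by simp
    finally show ?thesis .
  qed
  from h1 h2 U have "zero_pad r N C1 *\<^sub>v piN r N U = zero_pad r N C2 *\<^sub>v piN r N U" by auto
  then show "C1 $$ (t, p0) = C2 $$ (t, p0)" using val[OF C1] val[OF C2] by simp
qed

lemma coeff_lin_mult: "coeff ([:c, 1:] * p) k = c * coeff p k + (if k = 0 then 0 else coeff p (k - 1))"
  for c :: complex
  by (cases k) (simp_all add: mult_pCons_left coeff_pCons)

lemma coeff_fpoly_step:
  assumes "r \<le> n" "r \<ge> 1"
  shows "coeff (fpoly r a n s) k = (1 / a (- int r)) * ((- a 0) * coeff (fpoly r a (n - r) s) k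
     + (if k = 0 then 0 else coeff (fpoly r a (n - r) s) (k - 1))
     - (\<Sum>j\<in>{1..<r}. a (int j - int r) * coeff (fpoly r a (n - j) s) k))"
proof -
  have "fpoly r a n s = smult (1 / a (- int r)) ([:- a 0, 1:] * fpoly r a (n - r) s
     - (\<Sum>k\<in>{1..<r}. smult (a (int k - int r)) (fpoly r a (n - k) s)))"
    using assms by (subst fpoly.simps) simp
  then show ?thesis by (simp only: coeff_smult coeff_diff coeff_sum coeff_lin_mult)
qed

lemma fpoly_coeff:
  assumes r1: "r \<ge> 1" and s: "s < r"
  shows "(int k * int r > int n - int s \<longrightarrow> coeff (fpoly r a n s) k = 0) \<and>
         (int k * int r = int n - int s \<longrightarrow> coeff (fpoly r a n s) k = (1 / a (- int r)) ^ k)"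
proof (induction n arbitrary: k rule: less_induct)
  case (less n)
  show ?case
  proof (cases "n < r")
    case True
    then have f: "fpoly r a n s = (if n = s then 1 else 0)" by (simp add: fpoly.simps)
    show ?thesis
    proof (intro conjI impI)
      assume "int k * int r > int n - int s"
      then show "coeff (fpoly r a n s) k = 0" unfolding f
        by (cases k) (auto simp: coeff_1 split: if_splits)
    next
      assume h: "int k * int r = int n - int s"
      have "k = 0"
      proof (rule ccontr)
        assume "k \<noteq> 0" then have "k * r \<ge> r" by simp
        then have "int k * int r \<ge> int r" by (metis of_nat_le_iff of_nat_mult)
        with h True show False by simp
      qed
      then show "coeff (fpoly r a n s) k = (1 / a (- int r)) ^ k" using h f by auto
    qed
  next
    case False
    note st = coeff_fpoly_step[of r n a s k, OF _ r1]
    have IH1: "int k' * int r > int (n - r) - int s \<Longrightarrow> coeff (fpoly r a (n - r) s) k' = 0" for k'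
      using less.IH[of "n - r" k'] False r1 by auto
    have IH1': "int k' * int r = int (n - r) - int s \<Longrightarrow> coeff (fpoly r a (n - r) s) k' = (1 / a (- int r)) ^ k'" for k'
      using less.IH[of "n - r" k'] False r1 by auto
    have IH2: "j \<in> {1..<r} \<Longrightarrow> int k' * int r > int (n - j) - int s \<Longrightarrow> coeff (fpoly r a (n - j) s) k' = 0" for j k'
      using less.IH[of "n - j" k'] False r1 by auto
    show ?thesis
    proof (intro conjI impI)
      assume h: "int k * int r > int n - int s"
      have a1: "coeff (fpoly r a (n - r) s) k = 0" using IH1 h False by (simp add: of_nat_diff)
      have a2: "k \<noteq> 0 \<Longrightarrow> coeff (fpoly r a (n - r) s) (k - 1) = 0"
        using IH1[of "k - 1"] h False by (simp add: of_nat_diff algebra_simps)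
      have a3: "(\<Sum>j\<in>{1..<r}. a (int j - int r) * coeff (fpoly r a (n - j) s) k) = 0"
        by (rule sum.neutral) (use IH2 h False in \<open>auto simp: of_nat_diff\<close>)
      show "coeff (fpoly r a n s) k = 0" using st False a1 a2 a3 by auto
    next
      assume h: "int k * int r = int n - int s"
      have k0: "k \<noteq> 0"
      proof
        assume "k = 0" then show False using h False s by simp
      qed
      have a1: "coeff (fpoly r a (n - r) s) k = 0" using IH1 h False r1 by (simp add: of_nat_diff)
      have a2: "coeff (fpoly r a (n - r) s) (k - 1) = (1 / a (- int r)) ^ (k - 1)"
        using IH1'[of "k - 1"] h False k0 by (simp add: of_nat_diff algebra_simps)
      have a3: "(\<Sum>j\<in>{1..<r}. a (int j - int r) * coeff (fpoly r a (n - j) s) k) = 0"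
        by (rule sum.neutral) (use IH2 h False in \<open>auto simp: of_nat_diff\<close>)
      have "coeff (fpoly r a n s) k = (1 / a (- int r)) * (1 / a (- int r)) ^ (k - 1)"
        using st False a1 a2 a3 k0 by auto
      also have "\<dots> = (1 / a (- int r)) ^ k" using k0 by (cases k) auto
      finally show "coeff (fpoly r a n s) k = (1 / a (- int r)) ^ k" .
    qed
  qed
qed
lemma coeff_mult_bound:
  fixes p q :: "complex poly"
  assumes hp: "\<forall>k>dp. coeff p k = 0" and hq: "\<forall>k>dq. coeff q k = 0"
  shows "(\<forall>k>dp+dq. coeff (p * q) k = 0) \<and> coeff (p * q) (dp + dq) = coeff p dp * coeff q dq"
proof (intro conjI allI impI)
  fix k assume k: "k > dp + dq"
  show "coeff (p * q) k = 0" unfolding coeff_mult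
  proof (rule sum.neutral, intro ballI)
    fix i assume "i \<in> {..k}"
    show "coeff p i * coeff q (k - i) = 0"
      using hp hq k by (cases "i > dp") auto
  qed
next
  have "coeff (p * q) (dp + dq) = (\<Sum>i\<le>dp + dq. if i = dp then coeff p dp * coeff q dq else 0)"
    unfolding coeff_mult
  proof (rule sum.cong[OF refl])
    fix i assume "i \<in> {..dp + dq}"
    show "coeff p i * coeff q (dp + dq - i) = (if i = dp then coeff p dp * coeff q dq else 0)"
      using hp hq by (cases "i > dp"; cases "i = dp") auto
  qed
  also have "\<dots> = coeff p dp * coeff q dq" by simp
  finally show "coeff (p * q) (dp + dq) = coeff p dp * coeff q dq" .
qed

lemma coeff_prod_bound:
  fixes p :: "'b \<Rightarrow> complex poly"
  assumes "finite A" "\<forall>t\<in>A. \<forall>k>d t. coeff (p t) k = 0"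
  shows "(\<forall>k>sum d A. coeff (prod p A) k = 0) \<and> coeff (prod p A) (sum d A) = (\<Prod>t\<in>A. coeff (p t) (d t))"
  using assms
proof (induction A rule: finite_induct)
  case empty
  then show ?case by (auto simp: coeff_1)
next
  case (insert x F)
  then have IH: "(\<forall>k>sum d F. coeff (prod p F) k = 0) \<and> coeff (prod p F) (sum d F) = (\<Prod>t\<in>F. coeff (p t) (d t))"
    by auto
  have px: "\<forall>k>d x. coeff (p x) k = 0" using insert by auto
  show ?case using coeff_mult_bound[OF px, of "sum d F" "prod p F"] IH insert by auto
qed

lemma sum_card_ge:
  fixes S :: "nat set"
  assumes "finite S"
  shows "\<Sum>{0..<card S} \<le> \<Sum>S \<and> (\<Sum>S = \<Sum>{0..<card S} \<longrightarrow> S = {0..<card S})"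
  using assms
proof (induction "card S" arbitrary: S)
  case 0
  then show ?case by auto
next
  case (Suc m)
  then have ne: "S \<noteq> {}" by auto
  define M where "M = Max S"
  have MS: "M \<in> S" unfolding M_def using Suc ne by auto
  have le: "\<forall>x\<in>S. x \<le> M" unfolding M_def using Suc by auto
  define S' where "S' = S - {M}"
  have cS': "card S' = m" unfolding S'_def using Suc MS by auto
  have fS': "finite S'" unfolding S'_def using Suc by auto
  have IH: "\<Sum>{0..<m} \<le> \<Sum>S' \<and> (\<Sum>S' = \<Sum>{0..<m} \<longrightarrow> S' = {0..<m})"
    using Suc.hyps(1)[of S'] cS' fS' by auto
  have "S \<subseteq> {0..M}" using le by auto
  then have "card S \<le> Suc M" using card_mono[of "{0..M}" S] by auto
  then have Mm: "m \<le> M" using Suc by auto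
  have sS: "\<Sum>S = M + \<Sum>S'" unfolding S'_def using Suc MS by (simp add: sum.remove)
  have s0: "\<Sum>{0..<Suc m} = \<Sum>{0..<m} + m" by simp
  show ?case
  proof (intro conjI impI)
    show "\<Sum>{0..<card S} \<le> \<Sum>S" using sS s0 IH Mm Suc.hyps(2)[symmetric] by simp
  next
    assume eq: "\<Sum>S = \<Sum>{0..<card S}"
    then have "M + \<Sum>S' = \<Sum>{0..<m} + m" using sS s0 Suc.hyps(2)[symmetric] by simp
    then have "M = m" "\<Sum>S' = \<Sum>{0..<m}" using IH Mm by auto
    then have "S' = {0..<m}" using IH by auto
    then have "S = insert m {0..<m}" using MS \<open>M = m\<close> unfolding S'_def by auto
    then show "S = {0..<card S}" using Suc.hyps(2)[symmetric] by auto
  qed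
qed

lemma prod_const_poly: "(\<Prod>t\<in>A. [:b t:]) = [:\<Prod>t\<in>A. b t:]" for b :: "'b \<Rightarrow> complex"
  by (induction A rule: infinite_finite_induct) (simp_all add: mult_pCons_left)
lemma KT:
  fixes r N :: nat and a :: "int \<Rightarrow> complex" and f \<sigma> :: "nat \<Rightarrow> nat"
  assumes r1: "r \<ge> 1" and rN: "r \<le> N" and fN: "\<forall>t<r. f t < N" and inj: "inj_on f {0..<r}"
    and \<sigma>: "\<sigma> permutes {0..<r}"
  shows "(\<forall>k>N - r. coeff (\<Prod>t\<in>{0..<r}. fpoly r a (N - 1 - f t) (r - 1 - \<sigma> t)) k = 0) \<and>
    coeff (\<Prod>t\<in>{0..<r}. fpoly r a (N - 1 - f t) (r - 1 - \<sigma> t)) (N - r) =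
      (if f ` {0..<r} = {0..<r} \<and> (\<forall>t<r. \<sigma> t = nat ((int (f t) - int (N - r)) mod int r))
       then (1 / a (- int r)) ^ (N - r) else 0)"
proof -
  define M where "M = N - r"
  define c where "c = 1 / a (- int r)"
  define T where "T = (\<Prod>t\<in>{0..<r}. fpoly r a (N - 1 - f t) (r - 1 - \<sigma> t))"
  define cond where "cond = (f ` {0..<r} = {0..<r} \<and> (\<forall>t<r. \<sigma> t = nat ((int (f t) - int M) mod int r)))"
  define e where "e t = int M + int (\<sigma> t) - int (f t)" for t
  have \<sigma>r: "\<sigma> t < r" if "t < r" for t using permutes_in_image[OF \<sigma>, of t] that by auto
  have e_eq: "int (N - 1 - f t) - int (r - 1 - \<sigma> t) = e t" if "t < r" for t
  proof -
    have "Suc (f t) \<le> N" using fN that by auto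
    then show ?thesis using \<sigma>r[OF that] that rN unfolding e_def M_def by (simp add: of_nat_diff)
  qed
  have sum\<sigma>: "(\<Sum>t\<in>{0..<r}. int (\<sigma> t)) = (\<Sum>t\<in>{0..<r}. int t)"
    using sum.permute[OF \<sigma>, of int] by (simp add: comp_def)
  have sumf: "(\<Sum>t\<in>{0..<r}. f t) = \<Sum>(f ` {0..<r})" using sum.reindex[OF inj, of id] by simp
  have cardf: "card (f ` {0..<r}) = r" using card_image[OF inj] by simp
  define s0 where "s0 = \<Sum>{0..<r}"
  define sf where "sf = \<Sum>(f ` {0..<r})"
  have sc: "s0 \<le> sf \<and> (sf = s0 \<longrightarrow> f ` {0..<r} = {0..<r})"
    using sum_card_ge[of "f ` {0..<r}"] cardf unfolding s0_def sf_def by simp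
  have img_s: "f ` {0..<r} = {0..<r} \<Longrightarrow> sf = s0" unfolding sf_def s0_def by simp
  have sumf_int: "(\<Sum>t\<in>{0..<r}. int (f t)) = int sf" unfolding sf_def
    unfolding sumf[symmetric] by (simp only: of_nat_sum)
  have sumt_int: "(\<Sum>t\<in>{0..<r}. int t) = int s0" unfolding s0_def by (simp only: of_nat_sum)
  have sume: "(\<Sum>t\<in>{0..<r}. e t) = int r * int M + int s0 - int sf"
  proof -
    have "(\<Sum>t\<in>{0..<r}. e t) = (\<Sum>t\<in>{0..<r}. int M) + (\<Sum>t\<in>{0..<r}. int (\<sigma> t)) - (\<Sum>t\<in>{0..<r}. int (f t))"
      unfolding e_def by (simp only: sum_subtractf sum.distrib)
    also have "(\<Sum>t\<in>{0..<r}. int M) = int r * int M" by simp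
    finally show ?thesis unfolding sum\<sigma> sumf_int sumt_int .
  qed
  have sume_le: "(\<Sum>t\<in>{0..<r}. e t) \<le> int r * int M" using sume sc by simp
  have cond_e: "e t = int r * (- ((int (f t) - int M) div int r)) \<and> e t \<ge> 0" if cond "t < r" for t
  proof -
    define x where "x = int (f t) - int M"
    define q where "q = x div int r"
    have ft: "f t < r" using that unfolding cond_def by auto
    have s: "int (\<sigma> t) = x mod int r" using that r1 unfolding cond_def x_def by auto
    have m: "x mod int r = x - q * int r" unfolding q_def by (simp add: minus_div_mult_eq_mod)
    have e1: "e t = - (q * int r)" unfolding e_def using s m x_def by linarith
    have "e t > - int r" unfolding e_def using ft \<sigma>r[OF that(2)] by linarith
    have q0: "q \<le> 0"
    proof (rule ccontr)
      assume "\<not> q \<le> 0"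
      then have "1 * int r \<le> q * int r" by (intro mult_right_mono) auto
      then show False using e1 \<open>e t > - int r\<close> by linarith
    qed
    have "e t = int r * (- q)" using e1 by (simp add: algebra_simps)
    moreover have "e t \<ge> 0" using e1 q0 r1 by (simp add: mult_nonpos_nonneg)
    ultimately show ?thesis unfolding q_def x_def by simp
  qed
  have goal: "(\<forall>k>M. coeff T k = 0) \<and> coeff T M = (if cond then c ^ M else 0)"
  proof (cases "\<exists>t<r. e t < 0")
    case True
    then obtain t0 where t0: "t0 < r" "e t0 < 0" by auto
    have "fpoly r a (N - 1 - f t0) (r - 1 - \<sigma> t0) = 0"
    proof (rule poly_eqI)
      fix k
      have nn: "0 \<le> int k * int r" by simp
      have "int k * int r > int (N - 1 - f t0) - int (r - 1 - \<sigma> t0)" using e_eq[OF t0(1)] t0(2) nn by linarith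
      then show "coeff (fpoly r a (N - 1 - f t0) (r - 1 - \<sigma> t0)) k = coeff 0 k"
        using fpoly_coeff[OF r1, of "r - 1 - \<sigma> t0" "N - 1 - f t0" k a] r1 by simp
    qed
    then have T0: "T = 0" unfolding T_def using t0 by (intro prod_zero) auto
    have "\<not> cond" using cond_e t0 by force
    then show ?thesis using T0 by simp
  next
    case False
    then have e0: "e t \<ge> 0" if "t < r" for t using that by auto
    define d where "d t = nat (e t div int r)" for t
    have dt: "int (d t) = e t div int r" if "t < r" for t
      using e0[OF that] r1 unfolding d_def by (simp add: div_int_pos_iff)
    have dm: "e t = int r * int (d t) + e t mod int r" if "t < r" for t
      using div_mult_mod_eq[of "e t" "int r"] dt[OF that] by (simp add: mult.commute)
    have mb: "0 \<le> e t mod int r" "e t mod int r < int r" for t using r1 by simp_all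
    have dle: "int r * int (d t) \<le> e t" if "t < r" for t
      using dm[OF that] mb[of t] by linarith
    have bnd: "\<forall>t\<in>{0..<r}. \<forall>k>d t. coeff (fpoly r a (N - 1 - f t) (r - 1 - \<sigma> t)) k = 0"
    proof (intro ballI allI impI)
      fix t k assume t: "t \<in> {0..<r}" and k: "k > d t"
      have "int r * (int (d t) + 1) \<le> int r * int k" using k by (intro mult_left_mono) auto
      then have h1: "int r * int (d t) + int r \<le> int r * int k" by (simp add: distrib_left)
      have tr: "t < r" using t by simp
      have "e t < int r * int k" using dm[OF tr] mb[of t] h1 by linarith
      then have "int k * int r > int (N - 1 - f t) - int (r - 1 - \<sigma> t)" using e_eq[of t] t by (simp add: mult.commute)
      then show "coeff (fpoly r a (N - 1 - f t) (r - 1 - \<sigma> t)) k = 0"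
        using fpoly_coeff[OF r1, of "r - 1 - \<sigma> t" "N - 1 - f t" k a] r1 by simp
    qed
    have X: "(\<forall>k>sum d {0..<r}. coeff T k = 0) \<and> coeff T (sum d {0..<r}) = (\<Prod>t\<in>{0..<r}. coeff (fpoly r a (N - 1 - f t) (r - 1 - \<sigma> t)) (d t))"
      unfolding T_def by (rule coeff_prod_bound[OF _ bnd]) simp
    have si: "(\<Sum>t\<in>{0..<r}. int (d t)) = int (sum d {0..<r})" by (simp only: of_nat_sum)
    have "int r * (\<Sum>t\<in>{0..<r}. int (d t)) \<le> (\<Sum>t\<in>{0..<r}. e t)"
      unfolding sum_distrib_left by (rule sum_mono) (use dle in auto)
    also have "\<dots> \<le> int r * int M" by (rule sume_le)
    finally have "(\<Sum>t\<in>{0..<r}. int (d t)) \<le> int M" using r1 by simp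
    then have "int (sum d {0..<r}) \<le> int M" unfolding si[symmetric] .
    then have sdM: "sum d {0..<r} \<le> M" by (simp only: of_nat_le_iff)
    show ?thesis
    proof (cases "sum d {0..<r} < M")
      case True
      have "\<not> cond"
      proof
        assume cnd: cond
        then have img: "f ` {0..<r} = {0..<r}" unfolding cond_def by auto
        have "e t = int r * int (d t)" if tr: "t < r" for t
        proof -
          obtain q where q: "e t = int r * q" using cond_e[OF cnd tr] by blast
          have "e t div int r = q" using q r1 by simp
          then show ?thesis using dt[OF tr] q by simp
        qed
        then have "(\<Sum>t\<in>{0..<r}. e t) = int r * (\<Sum>t\<in>{0..<r}. int (d t))"
          by (simp add: sum_distrib_left)
        moreover have "(\<Sum>t\<in>{0..<r}. e t) = int r * int M" using sume img_s[OF img] by simp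
        ultimately have "(\<Sum>t\<in>{0..<r}. int (d t)) = int M" using r1 by simp
        then have "int (sum d {0..<r}) = int M" unfolding si[symmetric] .
        then have "sum d {0..<r} = M" by (simp only: of_nat_eq_iff)
        then show False using True by simp
      qed
      then show ?thesis using X True sdM by (auto simp del: of_nat_sum)
    next
      case False
      then have sdM': "sum d {0..<r} = M" using sdM by simp
      have "int r * int M \<le> (\<Sum>t\<in>{0..<r}. int r * int (d t))"
        unfolding sum_distrib_left[symmetric] si sdM' by simp
      also have "\<dots> \<le> (\<Sum>t\<in>{0..<r}. e t)" by (rule sum_mono) (use dle in auto)
      finally have geq: "int r * int M \<le> (\<Sum>t\<in>{0..<r}. e t)" .
      then have "(\<Sum>t\<in>{0..<r}. e t) = int r * int M" using sume_le by simp
      then have "sf = s0" using sume by simp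
      then have img: "f ` {0..<r} = {0..<r}" using sc by simp
      have "(\<Sum>t\<in>{0..<r}. e t - int r * int (d t)) = 0"
      proof -
        have "(\<Sum>t\<in>{0..<r}. e t - int r * int (d t)) = (\<Sum>t\<in>{0..<r}. e t) - (\<Sum>t\<in>{0..<r}. int r * int (d t))"
          by (simp add: sum_subtractf)
        also have "(\<Sum>t\<in>{0..<r}. int r * int (d t)) = int r * int M"
          unfolding sum_distrib_left[symmetric] si sdM' by simp
        finally show ?thesis using \<open>(\<Sum>t\<in>{0..<r}. e t) = int r * int M\<close> by simp
      qed
      then have ed: "e t = int r * int (d t)" if "t < r" for t
        using sum_nonneg_eq_0_iff[of "{0..<r}" "\<lambda>t. e t - int r * int (d t)"] dle that by auto
      have cnd: cond
        unfolding cond_def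
      proof (intro conjI allI impI img)
        fix t assume t: "t < r"
        have "int (f t) - int M = int (\<sigma> t) + int r * (- int (d t))"
          using ed[OF t] unfolding e_def by (simp add: algebra_simps)
        then have "(int (f t) - int M) mod int r = (int (\<sigma> t) + int r * (- int (d t))) mod int r" by simp
        also have "\<dots> = int (\<sigma> t) mod int r" by (rule mod_mult_self2)
        also have "\<dots> = int (\<sigma> t)" using \<sigma>r[OF t] by (intro mod_pos_pos_trivial) auto
        finally have "(int (f t) - int M) mod int r = int (\<sigma> t)" .
        then show "\<sigma> t = nat ((int (f t) - int M) mod int r)" by simp
      qed
      have "coeff T M = (\<Prod>t\<in>{0..<r}. coeff (fpoly r a (N - 1 - f t) (r - 1 - \<sigma> t)) (d t))"
        using X sdM' by simp
      also have "\<dots> = (\<Prod>t\<in>{0..<r}. c ^ d t)"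
      proof (rule prod.cong[OF refl])
        fix t assume t: "t \<in> {0..<r}"
        have "int (d t) * int r = int (N - 1 - f t) - int (r - 1 - \<sigma> t)" using ed e_eq t by (simp add: mult.commute)
        then show "coeff (fpoly r a (N - 1 - f t) (r - 1 - \<sigma> t)) (d t) = c ^ d t"
          using fpoly_coeff[OF r1, of "r - 1 - \<sigma> t" "N - 1 - f t" "d t" a] r1 unfolding c_def by simp
      qed
      also have "\<dots> = c ^ M" unfolding sdM'[symmetric] by (rule power_sum[symmetric])
      finally show ?thesis using X sdM' cnd by simp
    qed
  qed
  then show ?thesis unfolding M_def c_def T_def cond_def by simp
qed
lemma coeff_signof_mult: "coeff ((signof \<sigma> :: complex poly) * q) k = signof \<sigma> * coeff q k"
  by (simp add: sign_def)

lemma rho_permutes: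
  assumes r1: "r \<ge> 1"
  shows "(\<lambda>i. if i < r then nat ((int i - int M) mod int r) else i) permutes {0..<r}"
  (is "?\<rho> permutes _")
proof (rule bij_imp_permutes)
  have into: "?\<rho> ` {0..<r} \<subseteq> {0..<r}"
  proof
    fix y assume "y \<in> ?\<rho> ` {0..<r}"
    then obtain i where i: "i < r" "y = nat ((int i - int M) mod int r)" by auto
    have "(int i - int M) mod int r < int r" "0 \<le> (int i - int M) mod int r" using r1 by simp_all
    then show "y \<in> {0..<r}" using i by (simp add: nat_less_iff)
  qed
  have inj: "inj_on ?\<rho> {0..<r}"
  proof (rule inj_onI)
    fix i j assume i: "i \<in> {0..<r}" and j: "j \<in> {0..<r}" and eq: "?\<rho> i = ?\<rho> j"
    then have "(int i - int M) mod int r = (int j - int M) mod int r"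
      using r1 by (simp add: nat_eq_iff2)
    then have "int r dvd (int i - int M) - (int j - int M)" by (simp add: mod_eq_dvd_iff)
    then have d: "int r dvd int i - int j" by simp
    show "i = j"
    proof (rule ccontr)
      assume "i \<noteq> j"
      then have "int i - int j \<noteq> 0" by simp
      from dvd_imp_le_int[OF this d] i j show False by auto
    qed
  qed
  show "bij_betw ?\<rho> {0..<r} {0..<r}"
    unfolding bij_betw_def using inj endo_inj_surj[OF _ into inj] by simp
qed auto

lemma degree_part:
  assumes r1: "r \<ge> 1" and rN: "r \<le> N" and ar: "a (- int r) \<noteq> 0"
    and B: "B \<in> carrier_mat r N" and inv: "invertible_mat (left_block r B)"
  shows "degree (det (Pm r N a B)) = N - r"
proof -
  define M where "M = N - r"
  define c where "c = 1 / a (- int r)"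
  define F where "F = Fm r N a"
  define Bp where "Bp = map_mat (\<lambda>b. [:b:]) B"
  define \<rho> where "\<rho> = (\<lambda>i. if i < r then nat ((int i - int M) mod int r) else i)"
  define FF where "FF = {f. (\<forall>i\<in>{0..<r}. f i \<in> {0..<N}) \<and> (\<forall>i. i \<notin> {0..<r} \<longrightarrow> f i = i)}"
  define D where "D f = det (mat\<^sub>r r r (\<lambda>t. row F (f t)))" for f
  have Fc: "F \<in> carrier_mat N r" unfolding F_def Fm_def by auto
  have Bpc: "Bp \<in> carrier_mat r N" unfolding Bp_def using B by auto
  have \<rho>: "\<rho> permutes {0..<r}" unfolding \<rho>_def by (rule rho_permutes[OF r1])
  have finFF: "finite FF" unfolding FF_def by (rule finite_bounded_functions) auto
  have detP: "det (Pm r N a B) = (\<Sum>f\<in>FF. (\<Prod>t\<in>{0..<r}. [:B $$ (t, f t):]) * D f)"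
  proof -
    have "Pm r N a B = mat\<^sub>r r r (\<lambda>i. finsum_vec TYPE(complex poly) r (\<lambda>k. Bp $$ (i, k) \<cdot>\<^sub>v row F k) {0..<N})"
      unfolding Pm_def Bp_def[symmetric] F_def[symmetric] by (rule mat_mul_finsum_alt[OF Bpc Fc])
    then have "det (Pm r N a B) = (\<Sum>f\<in>FF. det (mat\<^sub>r r r (\<lambda>i. Bp $$ (i, f i) \<cdot>\<^sub>v row F (f i))))"
      unfolding FF_def using Fc by (simp add: det_linear_rows_sum)
    also have "\<dots> = (\<Sum>f\<in>FF. (\<Prod>t\<in>{0..<r}. [:B $$ (t, f t):]) * D f)"
    proof (rule sum.cong[OF refl])
      fix f assume f: "f \<in> FF"
      have "det (mat\<^sub>r r r (\<lambda>i. Bp $$ (i, f i) \<cdot>\<^sub>v row F (f i))) = prod (\<lambda>i. Bp $$ (i, f i)) {0..<r} * D f"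
        unfolding D_def by (rule det_rows_mul) (use Fc in auto)
      also have "prod (\<lambda>i. Bp $$ (i, f i)) {0..<r} = (\<Prod>t\<in>{0..<r}. [:B $$ (t, f t):])"
        by (rule prod.cong[OF refl]) (use f B in \<open>auto simp: Bp_def FF_def\<close>)
      finally show "det (mat\<^sub>r r r (\<lambda>i. Bp $$ (i, f i) \<cdot>\<^sub>v row F (f i))) = (\<Prod>t\<in>{0..<r}. [:B $$ (t, f t):]) * D f" .
    qed
    finally show ?thesis .
  qed
  have Dcoeff: "(\<forall>k>M. coeff (D f) k = 0) \<and>
     coeff (D f) M = (if f permutes {0..<r} then signof \<rho> * signof f * c ^ M else 0)" if f: "f \<in> FF" for f
  proof (cases "inj_on f {0..<r}")
    case False
    then obtain i j where ij: "i < r" "j < r" "i \<noteq> j" "f i = f j" unfolding inj_on_def by auto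
    have "D f = 0" unfolding D_def
      by (rule det_identical_rows[of _ r i j]) (use ij Fc f in \<open>auto simp: FF_def\<close>)
    moreover have "\<not> f permutes {0..<r}" using False permutes_inj_on by blast
    ultimately show ?thesis by simp
  next
    case True
    define T where "T \<sigma> = (\<Prod>t\<in>{0..<r}. fpoly r a (N - 1 - f t) (r - 1 - \<sigma> t))" for \<sigma>
    have fN: "\<forall>t<r. f t < N" using f unfolding FF_def by auto
    have Dsum: "D f = (\<Sum>\<sigma>\<in>{\<sigma>. \<sigma> permutes {0..<r}}. signof \<sigma> * T \<sigma>)"
      unfolding D_def
    proof (subst det_def'[of _ r], force, rule sum.cong[OF refl])
      fix \<sigma> assume \<sigma>: "\<sigma> \<in> {\<sigma>. \<sigma> permutes {0..<r}}"
      have "(\<Prod>i = 0..<r. mat\<^sub>r r r (\<lambda>t. row F (f t)) $$ (i, \<sigma> i)) = T \<sigma>"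
        unfolding T_def
      proof (rule prod.cong[OF refl])
        fix i assume i: "i \<in> {0..<r}"
        then have "\<sigma> i < r" using permutes_in_image[of \<sigma> "{0..<r}" i] \<sigma> by auto
        then show "mat\<^sub>r r r (\<lambda>t. row F (f t)) $$ (i, \<sigma> i) = fpoly r a (N - 1 - f i) (r - 1 - \<sigma> i)"
          using i fN unfolding F_def Fm_def by auto
      qed
      then show "signof \<sigma> * (\<Prod>i = 0..<r. mat\<^sub>r r r (\<lambda>t. row F (f t)) $$ (i, \<sigma> i)) = signof \<sigma> * T \<sigma>" by simp
    qed
    have Dc: "coeff (D f) k = (\<Sum>\<sigma>\<in>{\<sigma>. \<sigma> permutes {0..<r}}. signof \<sigma> * coeff (T \<sigma>) k)" for k
      unfolding Dsum coeff_sum coeff_signof_mult ..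
    note KT' = KT[OF r1 rN fN True, of _ a, folded M_def c_def, folded T_def]
    show ?thesis
    proof (intro conjI allI impI)
      fix k assume "k > M"
      then show "coeff (D f) k = 0" unfolding Dc using KT' by (intro sum.neutral) auto
    next
      show "coeff (D f) M = (if f permutes {0..<r} then signof \<rho> * signof f * c ^ M else 0)"
      proof (cases "f permutes {0..<r}")
        case False
        have "f ` {0..<r} \<noteq> {0..<r}"
        proof
          assume "f ` {0..<r} = {0..<r}"
          then have "bij_betw f {0..<r} {0..<r}" using True by (simp add: bij_betw_def)
          then have "f permutes {0..<r}" by (rule bij_imp_permutes) (use f in \<open>auto simp: FF_def\<close>)
          then show False using False by simp
        qed
        then show ?thesis unfolding Dc using KT' False by (intro trans[OF sum.neutral]) auto
      next
        case fp: True
        have img: "f ` {0..<r} = {0..<r}" using permutes_image[OF fp] .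
        have cnd: "(\<forall>t<r. \<sigma> t = nat ((int (f t) - int M) mod int r)) \<longleftrightarrow> \<sigma> = \<rho> \<circ> f"
          if \<sigma>: "\<sigma> permutes {0..<r}" for \<sigma>
        proof
          assume h: "\<forall>t<r. \<sigma> t = nat ((int (f t) - int M) mod int r)"
          show "\<sigma> = \<rho> \<circ> f"
          proof
            fix t show "\<sigma> t = (\<rho> \<circ> f) t"
            proof (cases "t < r")
              case True
              then have "f t < r" using img by auto
              then show ?thesis using h True unfolding \<rho>_def by simp
            next
              case False
              then have "\<sigma> t = t" "f t = t" using \<sigma> fp by (auto simp: permutes_def)
              then show ?thesis using False unfolding \<rho>_def by simp
            qed
          qed
        next
          assume "\<sigma> = \<rho> \<circ> f"
          then show "\<forall>t<r. \<sigma> t = nat ((int (f t) - int M) mod int r)"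
            using img unfolding \<rho>_def by auto
        qed
        have \<rho>f: "\<rho> \<circ> f permutes {0..<r}" by (rule permutes_compose[OF fp \<rho>])
        have "coeff (D f) M = (\<Sum>\<sigma>\<in>{\<sigma>. \<sigma> permutes {0..<r}}. if \<sigma> = \<rho> \<circ> f then signof \<sigma> * c ^ M else 0)"
          unfolding Dc
        proof (rule sum.cong[OF refl])
          fix \<sigma> assume \<sigma>: "\<sigma> \<in> {\<sigma>. \<sigma> permutes {0..<r}}"
          show "signof \<sigma> * coeff (T \<sigma>) M = (if \<sigma> = \<rho> \<circ> f then signof \<sigma> * c ^ M else 0)"
            using KT'[of \<sigma>] \<sigma> cnd[of \<sigma>] img by auto
        qed
        also have "\<dots> = signof (\<rho> \<circ> f) * c ^ M"
          using \<rho>f by (subst sum.delta) (auto simp: finite_permutations)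
        also have "signof (\<rho> \<circ> f) = signof \<rho> * signof f" by (rule signof_compose[OF \<rho> fp])
        finally show ?thesis using fp by simp
      qed
    qed
  qed
  have coeffP: "coeff (det (Pm r N a B)) k = (\<Sum>f\<in>FF. (\<Prod>t\<in>{0..<r}. B $$ (t, f t)) * coeff (D f) k)" for k
    unfolding detP coeff_sum prod_const_poly by (simp add: mult_pCons_left)
  have high: "coeff (det (Pm r N a B)) k = 0" if "k > M" for k
    unfolding coeffP using Dcoeff that by (intro sum.neutral) auto
  have "coeff (det (Pm r N a B)) M = (\<Sum>f\<in>FF. if f permutes {0..<r} then (\<Prod>t\<in>{0..<r}. B $$ (t, f t)) * (signof \<rho> * signof f * c ^ M) else 0)"
    unfolding coeffP by (rule sum.cong[OF refl]) (use Dcoeff in auto)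
  also have "\<dots> = (\<Sum>f\<in>{f\<in>FF. f permutes {0..<r}}. (\<Prod>t\<in>{0..<r}. B $$ (t, f t)) * (signof \<rho> * signof f * c ^ M))"
    using finFF by (simp add: sum.inter_filter)
  also have "{f\<in>FF. f permutes {0..<r}} = {p. p permutes {0..<r}}"
  proof (rule subset_antisym)
    show "{f\<in>FF. f permutes {0..<r}} \<subseteq> {p. p permutes {0..<r}}" by auto
  next
    show "{p. p permutes {0..<r}} \<subseteq> {f\<in>FF. f permutes {0..<r}}"
    proof
    fix p assume "p \<in> {p. p permutes {0..<r}}"
    then have p: "p permutes {0..<r}" by simp
    have "p i \<in> {0..<N}" if "i \<in> {0..<r}" for i
      using permutes_in_image[OF p, of i] that rN by auto
    moreover have "p i = i" if "i \<notin> {0..<r}" for i using permutes_not_in[OF p that] .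
    ultimately show "p \<in> {f\<in>FF. f permutes {0..<r}}" unfolding FF_def using p by blast
    qed
  qed
  also have "(\<Sum>f\<in>{p. p permutes {0..<r}}. (\<Prod>t\<in>{0..<r}. B $$ (t, f t)) * (signof \<rho> * signof f * c ^ M))
      = signof \<rho> * c ^ M * (\<Sum>f\<in>{p. p permutes {0..<r}}. signof f * (\<Prod>t\<in>{0..<r}. B $$ (t, f t)))"
    by (simp add: sum_distrib_left algebra_simps)
  also have "(\<Sum>f\<in>{p. p permutes {0..<r}}. signof f * (\<Prod>t\<in>{0..<r}. B $$ (t, f t))) = det (left_block r B)"
  proof -
    have L: "left_block r B \<in> carrier_mat r r" unfolding left_block_def by auto
    show ?thesis unfolding det_def'[OF L]
    proof (rule sum.cong[OF refl])
      fix p assume p: "p \<in> {p. p permutes {0..<r}}"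
      have "(\<Prod>t\<in>{0..<r}. B $$ (t, p t)) = (\<Prod>t\<in>{0..<r}. left_block r B $$ (t, p t))"
      proof (rule prod.cong[OF refl])
        fix t assume "t \<in> {0..<r}"
        moreover then have "p t < r" using permutes_in_image[of p "{0..<r}" t] p by auto
        ultimately show "B $$ (t, p t) = left_block r B $$ (t, p t)" unfolding left_block_def by auto
      qed
      then show "signof p * (\<Prod>t\<in>{0..<r}. B $$ (t, p t)) = signof p * (\<Prod>i = 0..<r. left_block r B $$ (i, p i))" by simp
    qed
  qed
  finally have cM: "coeff (det (Pm r N a B)) M = signof \<rho> * c ^ M * det (left_block r B)" .
  have detL: "det (left_block r B) \<noteq> 0"
  proof -
    have L: "left_block r B \<in> carrier_mat r r" unfolding left_block_def by auto
    from inv obtain Bi where i1: "left_block r B * Bi = 1\<^sub>m r" and i2: "Bi * left_block r B = 1\<^sub>m (dim_row Bi)"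
      unfolding invertible_mat_def inverts_mat_def using L by auto
    have "dim_col Bi = r" using arg_cong[OF i1, of dim_col] by simp
    moreover have "dim_row Bi = r" using arg_cong[OF i2, of dim_col] L by simp
    ultimately have Bic: "Bi \<in> carrier_mat r r" by auto
    have "det (left_block r B) * det Bi = 1" using arg_cong[OF i1, of det] det_mult[OF L Bic] by simp
    then show ?thesis by auto
  qed
  have sgn: "signof \<rho> \<noteq> (0::complex)" by (simp add: sign_def)
  have "c \<noteq> 0" unfolding c_def using ar by simp
  then have cM0: "coeff (det (Pm r N a B)) M \<noteq> 0" unfolding cM using sgn detL by simp
  have "degree (det (Pm r N a B)) \<le> M" by (rule degree_le) (use high in auto)
  moreover have "M \<le> degree (det (Pm r N a B))" by (rule le_degree[OF cM0])
  ultimately show ?thesis unfolding M_def by simp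
qed
theorem lemma3p2:
  fixes r N :: nat and a :: "int \<Rightarrow> complex" and B :: "complex mat"
  assumes "r \<ge> 1" and "N \<ge> r"
    and "a (- int r) \<noteq> 0" and "cmod (a 0) < 1"
    and "B \<in> carrier_mat r N"
    and "invertible_mat (left_block r B)"
  shows "(\<forall>z. cmod z \<ge> 1 \<longrightarrow>
            (\<exists>!C. C \<in> carrier_mat r r \<and>
               (\<forall>U\<in>Es r a z. B *\<^sub>v piN r N U = zero_pad r N C *\<^sub>v piN r N U)))
       \<and> (\<exists>P :: complex poly mat. P \<in> carrier_mat r r \<and>
            (\<forall>z. cmod z \<ge> 1 \<longrightarrow>
               (\<forall>U\<in>Es r a z. B *\<^sub>v piN r N U
                   = zero_pad r N (map_mat (\<lambda>p. poly p z) P) *\<^sub>v piN r N U)) \<and>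
            (\<exists>q :: complex poly. degree q = N - r \<and>
               (\<forall>z. cmod z \<ge> 1 \<longrightarrow> det (map_mat (\<lambda>p. poly p z) P) = poly q z)))"
proof (intro conjI allI impI)
  fix z :: complex assume z: "cmod z \<ge> 1"
  have za: "z \<noteq> a 0" using z assms(4) by auto
  show "\<exists>!C. C \<in> carrier_mat r r \<and> (\<forall>U\<in>Es r a z. B *\<^sub>v piN r N U = zero_pad r N C *\<^sub>v piN r N U)"
  proof (rule ex1I[where a = "map_mat (\<lambda>p. poly p z) (Pm r N a B)"])
    show "map_mat (\<lambda>p. poly p z) (Pm r N a B) \<in> carrier_mat r r \<and>
      (\<forall>U\<in>Es r a z. B *\<^sub>v piN r N U = zero_pad r N (map_mat (\<lambda>p. poly p z) (Pm r N a B)) *\<^sub>v piN r N U)"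
      using Pm_carrier[OF assms(5)] Pm_identity[where r=r and N=N and a=a and B=B, OF assms(1,2,3,5)] by auto
  next
    fix C assume C: "C \<in> carrier_mat r r \<and> (\<forall>U\<in>Es r a z. B *\<^sub>v piN r N U = zero_pad r N C *\<^sub>v piN r N U)"
    show "C = map_mat (\<lambda>p. poly p z) (Pm r N a B)"
      by (rule unique_C[where r=r and N=N and a=a and B=B and z=z, OF assms(1,2,3) za]) (use C Pm_carrier[OF assms(5)] Pm_identity[where r=r and N=N and a=a and B=B, OF assms(1,2,3,5)] in auto)
  qed
next
  show "\<exists>P :: complex poly mat. P \<in> carrier_mat r r \<and>
            (\<forall>z. cmod z \<ge> 1 \<longrightarrow>
               (\<forall>U\<in>Es r a z. B *\<^sub>v piN r N U
                   = zero_pad r N (map_mat (\<lambda>p. poly p z) P) *\<^sub>v piN r N U)) \<and>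
            (\<exists>q :: complex poly. degree q = N - r \<and>
               (\<forall>z. cmod z \<ge> 1 \<longrightarrow> det (map_mat (\<lambda>p. poly p z) P) = poly q z))"
  proof (intro exI conjI allI impI ballI)
    show "Pm r N a B \<in> carrier_mat r r" by (rule Pm_carrier[OF assms(5)])
    show "degree (det (Pm r N a B)) = N - r" by (rule degree_part[where r=r and N=N and a=a and B=B, OF assms(1,2,3,5,6)])
    fix z :: complex
    show "det (map_mat (\<lambda>p. poly p z) (Pm r N a B)) = poly (det (Pm r N a B)) z"
      by (rule comm_ring_hom.hom_det[OF comm_ring_hom_poly])
    fix U assume "U \<in> Es r a z"
    then show "B *\<^sub>v piN r N U = zero_pad r N (map_mat (\<lambda>p. poly p z) (Pm r N a B)) *\<^sub>v piN r N U"
      by (rule Pm_identity[where r=r and N=N and a=a and B=B, OF assms(1,2,3,5)])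
  qed
qed

end
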